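(* Let $U:(0,\infty)\to\mathbb R$ be a utility function satisfying Assumption 2. Let $\xi>0$ be a random variable with $\mathbb E[|U(\xi)|]<\infty$, and let $\eta=(\eta^i)_{0\le i\le m}$ be an $(m+1)$-dimensional random vector such that $\eta^i\ge-K\xi$ for $0\le i\le m$ and some constant $K>0$, and $\mathbb E[-U''(\xi)\|\eta\|^2]<\infty$. Then $w(s):=\mathbb E[U(\xi+\langle s,\eta\rangle)]$ is well defined for $s\in\mathbb R^{m+1}$ with $0\le s^i<\frac{1}{K(m+1)}$, $0\le i\le m$, and, as $s\to0$ within this set, $$w(s)=w(0)+\mathbb E[U'(\xi)\langle\eta,s\rangle]+\tfrac12\mathbb E[U''(\xi)\langle\eta,s\rangle^2]+o(\|s\|^2).$$
   Context: A utility function here is $U:(0,\infty)\to\mathbb R$ strictly increasing, strictly concave, continuously differentiable, with $U'(0+)=\infty$, $U'(\infty)=0$. Assumption 2: $U$ is twice continuously differentiable and $c_1<-xU''(x)/U'(x)<c_2$ for all $x>0$, for constants $0<c_1<c_2<\infty$. *)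

theory Defs
  imports "HOL-Analysis.Analysis" "HOL-Probability.Probability" "HOL-Library.Landau_Symbols"
begin

definition strictly_concave_on :: "real set \<Rightarrow> (real \<Rightarrow> real) \<Rightarrow> bool" where
  "strictly_concave_on S f \<longleftrightarrow>
     (\<forall>x\<in>S. \<forall>y\<in>S. \<forall>t. x \<noteq> y \<and> 0 < t \<and> t < 1 \<longrightarrow>
        (1 - t) * f x + t * f y < f ((1 - t) * x + t * y))"

text \<open>A utility function U on (0,oo) with first derivative U1 and second derivative U2,
  satisfying Assumption 2. Values of U, U1, U2 outside (0,oo) are irrelevant.\<close>
definition utility_A2 :: "(real \<Rightarrow> real) \<Rightarrow> (real \<Rightarrow> real) \<Rightarrow> (real \<Rightarrow> real) \<Rightarrow> bool" where
  "utility_A2 U U1 U2 \<longleftrightarrow>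
     strict_mono_on {0<..} U \<and>
     strictly_concave_on {0<..} U \<and>
     (\<forall>x>0. (U has_real_derivative U1 x) (at x)) \<and>
     continuous_on {0<..} U1 \<and>
     filterlim U1 at_top (at_right 0) \<and>
     (U1 \<longlongrightarrow> 0) at_top \<and>
     (\<forall>x>0. (U1 has_real_derivative U2 x) (at x)) \<and>
     continuous_on {0<..} U2 \<and>
     (\<exists>c1 c2. 0 < c1 \<and> c1 < c2 \<and>
        (\<forall>x>0. c1 < - x * U2 x / U1 x \<and> - x * U2 x / U1 x < c2))"

end

theory Submission
  imports Defs
begin

lemma util_c:
  assumes "utility_A2 U U1 U2"
  obtains c1 c2 where "0 < c1" "c1 < c2" "\<And>x. x > 0 \<Longrightarrow> c1 < - x * U2 x / U1 x \<and> - x * U2 x / U1 x < c2"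
  using assms unfolding utility_A2_def by blast

lemma util_deriv:
  assumes "utility_A2 U U1 U2" "x > 0"
  shows "(U has_real_derivative U1 x) (at x)" "(U1 has_real_derivative U2 x) (at x)"
  using assms unfolding utility_A2_def by auto

lemma util_cont:
  assumes "utility_A2 U U1 U2"
  shows "continuous_on {0<..} U" "continuous_on {0<..} U1" "continuous_on {0<..} U2"
proof -
  show "continuous_on {0<..} U"
    by (intro continuous_at_imp_continuous_on ballI DERIV_isCont[OF util_deriv(1)[OF assms]]) auto
qed (use assms in \<open>auto simp: utility_A2_def\<close>)

lemma util_sign:
  assumes "utility_A2 U U1 U2" "x > 0"
  shows "U1 x > 0" "U2 x < 0"
proof -
  obtain c1 c2 where c: "0 < c1" "c1 < c2" "\<And>x. x > 0 \<Longrightarrow> c1 < - x * U2 x / U1 x \<and> - x * U2 x / U1 x < c2"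
    using util_c[OF assms(1)] by blast
  have ne: "U1 x \<noteq> 0" using c(1) c(3)[OF assms(2)] by auto
  have ge: "U1 x \<ge> 0"
  proof (rule ccontr)
    assume "\<not> U1 x \<ge> 0"
    then obtain d where d: "d > 0" "\<forall>h>0. h < d \<longrightarrow> U x > U (x + h)"
      using DERIV_neg_dec_right[OF util_deriv(1)[OF assms]] by force
    have "U x < U (x + d/2)"
      using assms(1) \<open>x>0\<close> d(1) unfolding utility_A2_def strict_mono_on_def by auto
    moreover have "U (x + d/2) < U x" using d(2) d(1) by force
    ultimately show False by simp
  qed
  show "U1 x > 0" using ne ge by auto
  moreover have "0 < - x * U2 x / U1 x" using c(1) c(3)[OF assms(2)] by linarith
  ultimately have "0 < - x * U2 x" by (simp add: divide_less_0_iff)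
  then show "U2 x < 0" using assms(2) by (simp add: mult_less_0_iff)
qed

lemma U1_by_U2:
  assumes "utility_A2 U U1 U2"
  obtains c where "c > 0" "\<And>x. x > 0 \<Longrightarrow> U1 x \<le> c * x * (- U2 x)"
proof -
  obtain c1 c2 where c: "0 < c1" "c1 < c2" "\<And>x. x > 0 \<Longrightarrow> c1 < - x * U2 x / U1 x \<and> - x * U2 x / U1 x < c2"
    using util_c[OF assms(1)] by blast
  have "U1 x \<le> (1/c1) * x * (- U2 x)" if "x > 0" for x
  proof -
    have "c1 < - x * U2 x / U1 x" using c(3)[OF that] by auto
    then have "c1 * U1 x < - x * U2 x" using util_sign[OF assms that] by (simp add: field_simps)
    then show ?thesis using c(1) by (simp add: field_simps)
  qed
  then show ?thesis
  proof (intro that[of "1/c1"])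
    show "0 < 1/c1" using c(1) by simp
  qed
qed

lemma ring_id: "\<And>a b c::real. (a+1)*(1+b+c) = a+1+b+c+a*(b+c)"
  by (simp add: algebra_simps)

lemma ring_id2: "\<And>a b c d e::real. (1 + c2) * (a + 1 + b + d + e) = (a + 1 + b + d + e) + c2 * a + c2 + c2 * b + c2 * d + c2 * e"
  by (simp add: algebra_simps)

lemma mono_helper:
  fixes f f' :: "real \<Rightarrow> real"
  assumes "0 < a" "a \<le> b" "\<And>y. y > 0 \<Longrightarrow> (f has_real_derivative f' y) (at y)"
    "\<And>y. y > 0 \<Longrightarrow> f' y \<ge> 0"
  shows "f a \<le> f b"
proof (rule DERIV_nonneg_imp_increasing_open[OF assms(2)])
  fix y assume "a < y" "y < b"
  then have "y > 0" using assms(1) by simp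
  then show "\<exists>d. (f has_real_derivative d) (at y) \<and> 0 \<le> d" using assms(3,4) by blast
next
  have "isCont f y" if "y \<in> {a..b}" for y
  proof -
    have "y > 0" using that assms(1) by simp
    then show ?thesis using assms(3) DERIV_isCont by blast
  qed
  then show "continuous_on {a..b} f" by (intro continuous_at_imp_continuous_on) blast
qed

lemma U1_antimono:
  assumes "utility_A2 U U1 U2" "0 < x" "x \<le> z"
  shows "U1 z \<le> U1 x"
proof -
  have "(\<lambda>y. - U1 y) x \<le> (\<lambda>y. - U1 y) z"
  proof (rule mono_helper[where f="\<lambda>y. - U1 y" and f'="\<lambda>y. - U2 y"])
    fix y :: real assume y: "y > 0"
    show "((\<lambda>y. - U1 y) has_real_derivative - U2 y) (at y)"
      using util_deriv(2)[OF assms(1) y] by (rule DERIV_minus)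
    show "0 \<le> - U2 y" using util_sign[OF assms(1) y] by simp
  qed (use assms in auto)
  then show ?thesis by simp
qed

lemma U2_bound:
  assumes "utility_A2 U U1 U2" "0 < l" "l \<le> 1"
  obtains C where "C > 0" "\<And>x z. 0 < x \<Longrightarrow> l * x \<le> z \<Longrightarrow> - U2 z \<le> C * (- U2 x)"
proof -
  obtain c1 c2 where c: "0 < c1" "c1 < c2" "\<And>x. x > 0 \<Longrightarrow> c1 < - x * U2 x / U1 x \<and> - x * U2 x / U1 x < c2"
    using util_c[OF assms(1)] by blast
  define P where "P = (1/l) powr c2"
  have P1: "P \<ge> 1" unfolding P_def using assms c by (intro ge_one_powr_ge_zero) auto
  have g_mono: "z powr c2 * U1 z \<le> x powr c2 * U1 x" if "0 < z" "z \<le> x" for z x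
  proof (rule mono_helper[where f="\<lambda>y. y powr c2 * U1 y" and f'="\<lambda>y. c2 * y powr (c2 - 1) * U1 y + y powr c2 * U2 y"])
    fix y :: real assume y: "y > 0"
    show "((\<lambda>y. y powr c2 * U1 y) has_real_derivative c2 * y powr (c2 - 1) * U1 y + y powr c2 * U2 y) (at y)"
      using y util_deriv[OF assms(1) y]
      by (auto intro!: derivative_eq_intros has_real_derivative_powr)
    have "- y * U2 y / U1 y < c2" using c(3)[OF y] by auto
    then have "- y * U2 y < c2 * U1 y" using util_sign[OF assms(1) y] by (simp add: field_simps)
    then have "0 \<le> y powr (c2 - 1) * (c2 * U1 y + y * U2 y)" by simp
    also have "y powr (c2 - 1) * (c2 * U1 y + y * U2 y) = c2 * y powr (c2 - 1) * U1 y + (y * y powr (c2 - 1)) * U2 y"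
      by (simp add: algebra_simps)
    also have "y * y powr (c2 - 1) = y powr c2" using y by (simp add: powr_mult_base)
    finally show "0 \<le> c2 * y powr (c2 - 1) * U1 y + y powr c2 * U2 y" .
  qed (use that in auto)
  have U1b: "U1 z \<le> P * U1 x" if "0 < x" "l * x \<le> z" for x z
  proof (cases "z \<le> x")
    case True
    have "l * x > 0" using that assms by simp
    then have z: "z > 0" using that by linarith
    have "z powr c2 * U1 z \<le> x powr c2 * U1 x" using g_mono[OF z True] .
    then have "U1 z \<le> (x powr c2 / z powr c2) * U1 x" using z by (simp add: field_simps)
    also have "x powr c2 / z powr c2 = (x / z) powr c2" by (simp add: powr_divide)
    also have "(x / z) powr c2 \<le> P" unfolding P_def
      using that z assms c by (intro powr_mono2) (auto simp: field_simps)
    finally show ?thesis using util_sign[OF assms(1) that(1)] by (simp add: mult_right_mono)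
  next
    case False
    then have "U1 z \<le> U1 x" using U1_antimono[OF assms(1) that(1)] by simp
    also have "\<dots> \<le> P * U1 x" using P1 util_sign[OF assms(1) that(1)] by simp
    finally show ?thesis .
  qed
  show ?thesis
  proof (rule that[of "c2 * P / (c1 * l)"])
    show "0 < c2 * P / (c1 * l)" using c assms P1 by simp
    fix x z assume xz: "0 < x" "l * x \<le> z"
    have "l * x > 0" using xz assms by simp
    then have z: "z > 0" using xz by linarith
    have "- z * U2 z / U1 z < c2" using c(3)[OF z] by auto
    then have "- U2 z \<le> c2 * U1 z / z" using util_sign[OF assms(1) z] z by (simp add: field_simps)
    also have "\<dots> \<le> c2 * (P * U1 x) / (l * x)"
      using U1b[OF xz] util_sign[OF assms(1) z] c z xz assms
      by (intro frac_le mult_left_mono) auto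
    also have "c1 < - x * U2 x / U1 x" using c(3)[OF xz(1)] by auto
    then have "U1 x \<le> x * (- U2 x) / c1" using util_sign[OF assms(1) xz(1)] c(1) by (simp add: field_simps)
    then have "c2 * (P * U1 x) / (l * x) \<le> c2 * (P * (x * (- U2 x) / c1)) / (l * x)"
      using c P1 xz assms by (intro divide_right_mono mult_left_mono) auto
    also have "\<dots> = c2 * P / (c1 * l) * (- U2 x)" using xz c assms by (simp add: field_simps)
    finally show "- U2 z \<le> c2 * P / (c1 * l) * (- U2 x)" .
  qed
qed

lemma xU1_bound:
  assumes "utility_A2 U U1 U2"
  obtains C where "C > 0" "\<And>x. 0 < x \<Longrightarrow> x * U1 x \<le> C * (\<bar>U x\<bar> + 1)"
proof -
  obtain c1 c2 where c: "0 < c1" "c1 < c2" "\<And>x. x > 0 \<Longrightarrow> c1 < - x * U2 x / U1 x \<and> - x * U2 x / U1 x < c2"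
    using util_c[OF assms(1)] by blast
  define C where "C = (1 + c2) * (1 + \<bar>U 1\<bar> + \<bar>U1 1\<bar>)"
  show ?thesis
  proof (rule that[of C])
    show "C > 0" unfolding C_def using c by (simp add: add_pos_nonneg)
    fix x :: real assume x: "x > 0"
    show "x * U1 x \<le> C * (\<bar>U x\<bar> + 1)"
    proof (cases "x \<ge> 1")
      case True
      have "(\<lambda>y. U y - y * U1 y) 1 \<le> (\<lambda>y. U y - y * U1 y) x"
      proof (rule mono_helper[where f="\<lambda>y. U y - y * U1 y" and f'="\<lambda>y. - y * U2 y"])
        fix y :: real assume y: "y > 0"
        show "((\<lambda>y. U y - y * U1 y) has_real_derivative - y * U2 y) (at y)"
          using util_deriv[OF assms y] by (auto intro!: derivative_eq_intros)
        show "0 \<le> - y * U2 y" using util_sign[OF assms y] y by (simp add: mult_nonneg_nonpos)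
      qed (use True in auto)
      then have "x * U1 x \<le> U x - U 1 + U1 1" by simp
      also have "\<dots> \<le> (\<bar>U x\<bar> + 1) * (1 + \<bar>U 1\<bar> + \<bar>U1 1\<bar>)"
      proof -
        have "(\<bar>U x\<bar> + 1) * (1 + \<bar>U 1\<bar> + \<bar>U1 1\<bar>) = \<bar>U x\<bar> + 1 + \<bar>U 1\<bar> + \<bar>U1 1\<bar> + \<bar>U x\<bar> * (\<bar>U 1\<bar> + \<bar>U1 1\<bar>)"
          using ring_id by blast
        moreover have "\<bar>U x\<bar> * (\<bar>U 1\<bar> + \<bar>U1 1\<bar>) \<ge> 0" by simp
        ultimately show ?thesis by linarith
      qed
      also have "\<dots> \<le> C * (\<bar>U x\<bar> + 1)"
      proof -
        define X where "X = (\<bar>U x\<bar> + 1) * (1 + \<bar>U 1\<bar> + \<bar>U1 1\<bar>)"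
        have "X \<ge> 0" unfolding X_def by simp
        then have "c2 * X \<ge> 0" using c by simp
        then have "X \<le> (1 + c2) * X" by (simp add: distrib_right)
        also have "(1 + c2) * X = C * (\<bar>U x\<bar> + 1)" unfolding X_def C_def by (simp add: mult_ac)
        finally show ?thesis unfolding X_def .
      qed
      finally show ?thesis .
    next
      case False
      have "(\<lambda>y. c2 * U y + y * U1 y) x \<le> (\<lambda>y. c2 * U y + y * U1 y) 1"
      proof (rule mono_helper[where f="\<lambda>y. c2 * U y + y * U1 y" and f'="\<lambda>y. (c2 + 1) * U1 y + y * U2 y"])
        fix y :: real assume y: "y > 0"
        show "((\<lambda>y. c2 * U y + y * U1 y) has_real_derivative (c2 + 1) * U1 y + y * U2 y) (at y)"
          using util_deriv[OF assms y] by (auto intro!: derivative_eq_intros simp: algebra_simps)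
        have "- y * U2 y / U1 y < c2" using c(3)[OF y] by auto
        then have "- y * U2 y < c2 * U1 y" using util_sign[OF assms y] by (simp add: field_simps)
        then show "0 \<le> (c2 + 1) * U1 y + y * U2 y" using util_sign[OF assms y] by (simp add: algebra_simps)
      qed (use False x in auto)
      then have "x * U1 x \<le> c2 * U 1 + U1 1 - c2 * U x" by simp
      also have "\<dots> \<le> (1 + c2) * ((\<bar>U x\<bar> + 1) * (1 + \<bar>U 1\<bar> + \<bar>U1 1\<bar>))"
      proof -
        have e1: "(\<bar>U x\<bar> + 1) * (1 + \<bar>U 1\<bar> + \<bar>U1 1\<bar>) = \<bar>U x\<bar> + 1 + \<bar>U 1\<bar> + \<bar>U1 1\<bar> + \<bar>U x\<bar> * (\<bar>U 1\<bar> + \<bar>U1 1\<bar>)"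
          using ring_id by blast
        have "c2 * U 1 + U1 1 - c2 * U x \<le> (1 + c2) * (\<bar>U x\<bar> + 1 + \<bar>U 1\<bar> + \<bar>U1 1\<bar> + \<bar>U x\<bar> * (\<bar>U 1\<bar> + \<bar>U1 1\<bar>))"
        proof -
        have "\<bar>U x\<bar> * (\<bar>U 1\<bar> + \<bar>U1 1\<bar>) \<ge> 0" by simp
        moreover have "c2 * U 1 \<le> c2 * \<bar>U 1\<bar>" "U1 1 \<le> \<bar>U1 1\<bar>"
          using c by (auto intro: mult_left_mono)
        moreover have "c2 * (- U x) \<le> c2 * \<bar>U x\<bar>" by (rule mult_left_mono) (use c in auto)
        moreover have "(1 + c2) * (\<bar>U x\<bar> + 1 + \<bar>U 1\<bar> + \<bar>U1 1\<bar> + \<bar>U x\<bar> * (\<bar>U 1\<bar> + \<bar>U1 1\<bar>))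
          = (\<bar>U x\<bar> + 1 + \<bar>U 1\<bar> + \<bar>U1 1\<bar> + \<bar>U x\<bar> * (\<bar>U 1\<bar> + \<bar>U1 1\<bar>)) + c2 * \<bar>U x\<bar> + c2 + c2 * \<bar>U 1\<bar> + c2 * \<bar>U1 1\<bar> + c2 * (\<bar>U x\<bar> * (\<bar>U 1\<bar> + \<bar>U1 1\<bar>))"
          using ring_id2 by blast
        moreover have "c2 * (\<bar>U x\<bar> * (\<bar>U 1\<bar> + \<bar>U1 1\<bar>)) \<ge> 0" "c2 * \<bar>U1 1\<bar> \<ge> 0" using c by simp_all
        moreover have "c2 * (- U x) = - (c2 * U x)" by simp
        moreover have "c2 > 0" using c by simp
        moreover have "\<bar>U x\<bar> \<ge> 0" "\<bar>U 1\<bar> \<ge> 0" "\<bar>U1 1\<bar> \<ge> 0" by simp_all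
        ultimately show ?thesis by linarith
        qed
        then show ?thesis by (simp only: e1)
      qed
      also have "\<dots> = C * (\<bar>U x\<bar> + 1)" unfolding C_def by simp
      finally show ?thesis .
    qed
  qed
qed

lemma taylor2:
  assumes "utility_A2 U U1 U2" "x > 0" "x + h > 0"
  obtains t where "min x (x+h) \<le> t" "t \<le> max x (x+h)" "U (x+h) = U x + U1 x * h + U2 t / 2 * h\<^sup>2"
proof (cases "h = 0")
  case True
  then show ?thesis using that[of x] by simp
next
  case False
  define diff where "diff = (\<lambda>m::nat. if m = 0 then U else if m = 1 then U1 else U2)"
  have D: "\<forall>m t. m < 2 \<and> min x (x+h) \<le> t \<and> t \<le> max x (x+h) \<longrightarrow> DERIV (diff m) t :> diff (Suc m) t"
  proof (intro allI impI)
    fix m :: nat and t :: real assume mt: "m < 2 \<and> min x (x+h) \<le> t \<and> t \<le> max x (x+h)"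
    then have t: "t > 0" using assms by linarith
    have "m = 0 \<or> m = 1" using mt by auto
    then show "DERIV (diff m) t :> diff (Suc m) t"
      using util_deriv[OF assms(1) t] unfolding diff_def by auto
  qed
  obtain t where t: "(if x + h < x then x + h < t \<and> t < x else x < t \<and> t < x + h)"
    "U (x + h) = (\<Sum>m<2. diff m x / fact m * (x + h - x) ^ m) + diff 2 t / fact 2 * (x + h - x) ^ 2"
    using Taylor[of 2 diff U "min x (x+h)" "max x (x+h)" x "x+h", OF _ _ D] False
    unfolding diff_def by auto
  have "(\<Sum>m<2. diff m x / fact m * (x + h - x) ^ m) = U x + U1 x * h"
    by (simp add: numeral_2_eq_2 diff_def)
  moreover have "diff 2 t / fact 2 * (x + h - x) ^ 2 = U2 t / 2 * h\<^sup>2"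
    by (simp add: diff_def)
  ultimately have "U (x+h) = U x + U1 x * h + U2 t / 2 * h\<^sup>2" using t(2) by simp
  moreover have "min x (x+h) \<le> t" "t \<le> max x (x+h)" using t(1) by (auto split: if_splits)
  ultimately show ?thesis using that by blast
qed

lemma meas_comp_pos:
  fixes g :: "real \<Rightarrow> real"
  assumes "continuous_on {0<..} g" "f \<in> borel_measurable M" "\<forall>\<omega>\<in>space M. f \<omega> > 0"
  shows "(\<lambda>\<omega>. g (f \<omega>)) \<in> borel_measurable M"
proof -
  have "(\<lambda>x::real. if x \<in> {0<..} then g x else 0) \<in> borel_measurable borel"
    by (rule borel_measurable_continuous_on_if) (use assms(1) in auto)
  then have "(\<lambda>x::real. if x \<in> {0<..} then g x else 0) \<circ> f \<in> borel_measurable M"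
    using measurable_comp[OF assms(2)] by blast
  then have "(\<lambda>\<omega>. if f \<omega> \<in> {0<..} then g (f \<omega>) else 0) \<in> borel_measurable M"
    by (simp add: comp_def)
  then show ?thesis
    by (rule measurable_cong[THEN iffD1, rotated]) (use assms(3) in auto)
qed

lemma rem_bound:
  assumes "utility_A2 U U1 U2" "x > 0" "x + h > 0" "l * x \<le> x + h" "0 < l" "l \<le> 1"
    "\<And>x z. 0 < x \<Longrightarrow> l * x \<le> z \<Longrightarrow> - U2 z \<le> C * (- U2 x)"
  shows "\<bar>U (x+h) - U x - U1 x * h - 1/2 * (U2 x * h\<^sup>2)\<bar> \<le> (C + 1) / 2 * (- U2 x) * h\<^sup>2"
    and "\<bar>U (x+h)\<bar> \<le> \<bar>U x\<bar> + \<bar>U1 x * h\<bar> + C / 2 * (- U2 x) * h\<^sup>2"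
proof -
  obtain t where t: "min x (x+h) \<le> t" "t \<le> max x (x+h)" "U (x+h) = U x + U1 x * h + U2 t / 2 * h\<^sup>2"
    using taylor2[OF assms(1-3)] by blast
  have "l * x \<le> x" using assms(2,6) by simp
  then have lt: "l * x \<le> t" using t(1) assms(4) by linarith
  have tpos: "t > 0" using t(1) assms(2,3) by linarith
  have b: "- U2 t \<le> C * (- U2 x)" using assms(7)[OF assms(2) lt] .
  have n1: "U2 t < 0" "U2 x < 0" using util_sign[OF assms(1)] tpos assms(2) by auto
  have h2: "h\<^sup>2 \<ge> 0" by simp
  have "U (x+h) - U x - U1 x * h - 1/2 * (U2 x * h\<^sup>2) = (U2 t - U2 x) / 2 * h\<^sup>2"
    using t(3) by (simp add: algebra_simps)
  moreover have "\<bar>(U2 t - U2 x) / 2 * h\<^sup>2\<bar> = \<bar>U2 t - U2 x\<bar> / 2 * h\<^sup>2" by (simp add: abs_mult)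
  moreover have "\<bar>U2 t - U2 x\<bar> \<le> (C + 1) * (- U2 x)" using b n1 by (simp add: algebra_simps abs_if)
  then have "\<bar>U2 t - U2 x\<bar> / 2 * h\<^sup>2 \<le> (C + 1) * (- U2 x) / 2 * h\<^sup>2"
    by (intro mult_right_mono divide_right_mono) auto
  ultimately show "\<bar>U (x+h) - U x - U1 x * h - 1/2 * (U2 x * h\<^sup>2)\<bar> \<le> (C + 1) / 2 * (- U2 x) * h\<^sup>2"
    by simp
  have "\<bar>U2 t / 2 * h\<^sup>2\<bar> = (- U2 t) / 2 * h\<^sup>2" using n1 by (simp add: abs_mult)
  also have "\<dots> \<le> C * (- U2 x) / 2 * h\<^sup>2" using b by (intro mult_right_mono divide_right_mono) auto
  finally have "\<bar>U2 t / 2 * h\<^sup>2\<bar> \<le> C / 2 * (- U2 x) * h\<^sup>2" by simp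
  then show "\<bar>U (x+h)\<bar> \<le> \<bar>U x\<bar> + \<bar>U1 x * h\<bar> + C / 2 * (- U2 x) * h\<^sup>2"
    using t(3) by linarith
qed

lemma rem_pointwise:
  fixes e :: "'b::real_inner" and Y :: "nat \<Rightarrow> 'b"
  assumes "utility_A2 U U1 U2" "x > 0" "Y \<longlonglongrightarrow> 0" "\<And>n. x + Y n \<bullet> e > 0"
  shows "(\<lambda>n. (U (x + Y n \<bullet> e) - U x - U1 x * (e \<bullet> Y n) - 1/2 * (U2 x * (e \<bullet> Y n)\<^sup>2)) / (norm (Y n))\<^sup>2) \<longlonglongrightarrow> 0"
proof (rule LIMSEQ_I)
  fix r :: real assume r: "r > 0"
  have "isCont U2 x"
    using util_cont(3)[OF assms(1)] assms(2) continuous_on_eq_continuous_at[of "{0<..}" U2]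
    by auto
  then have lim: "U2 \<midarrow>x\<rightarrow> U2 x" by (simp add: isCont_def)
  define r' where "r' = r / ((norm e)\<^sup>2 + 1)"
  have r': "r' > 0" unfolding r'_def using r by (simp add: add_nonneg_pos)
  obtain d where d: "d > 0" "\<And>y. y \<noteq> x \<and> norm (y - x) < d \<Longrightarrow> norm (U2 y - U2 x) < r'"
    using LIM_D[OF lim r'] by blast
  have dd: "d / (norm e + 1) > 0" using d(1) by (simp add: add_nonneg_pos)
  obtain N where N: "\<And>n. n \<ge> N \<Longrightarrow> norm (Y n - 0) < d / (norm e + 1)"
    using LIMSEQ_D[OF assms(3) dd] by blast
  show "\<exists>no. \<forall>n\<ge>no. norm ((U (x + Y n \<bullet> e) - U x - U1 x * (e \<bullet> Y n) - 1/2 * (U2 x * (e \<bullet> Y n)\<^sup>2)) / (norm (Y n))\<^sup>2 - 0) < r"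
  proof (intro exI allI impI)
    fix n assume n: "n \<ge> N"
    define h where "h = Y n \<bullet> e"
    have eh: "e \<bullet> Y n = h" unfolding h_def by (simp add: inner_commute)
    have hpos: "x + h > 0" unfolding h_def using assms(4) .
    obtain t where t: "min x (x+h) \<le> t" "t \<le> max x (x+h)" "U (x+h) = U x + U1 x * h + U2 t / 2 * h\<^sup>2"
      using taylor2[OF assms(1,2) hpos] by blast
    have habs: "\<bar>h\<bar> \<le> norm (Y n) * norm e" unfolding h_def by (rule Cauchy_Schwarz_ineq2)
    have "norm (Y n) * norm e \<le> norm (Y n) * (norm e + 1)" by (simp add: mult_left_mono)
    also have "\<dots> < d / (norm e + 1) * (norm e + 1)"
      using N[OF n] by (intro mult_strict_right_mono) (auto simp: add_nonneg_pos)
    also have "\<dots> = d"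
    proof -
      have "norm e + 1 \<noteq> 0" by (metis add_nonneg_pos norm_ge_zero zero_less_one less_irrefl)
      then show ?thesis by simp
    qed
    finally have hd: "\<bar>h\<bar> < d" using habs by linarith
    have "\<bar>t - x\<bar> \<le> \<bar>h\<bar>" using t(1,2) by (auto simp: min_def max_def split: if_splits)
    then have "\<bar>U2 t - U2 x\<bar> < r' \<or> t = x" using d(2)[of t] hd by auto
    then have U2d: "\<bar>U2 t - U2 x\<bar> \<le> r'" using r' by auto
    have num: "U (x + Y n \<bullet> e) - U x - U1 x * (e \<bullet> Y n) - 1/2 * (U2 x * (e \<bullet> Y n)\<^sup>2) = (U2 t - U2 x) / 2 * h\<^sup>2"
      unfolding eh h_def[symmetric] using t(3) by (simp add: algebra_simps)
    show "norm ((U (x + Y n \<bullet> e) - U x - U1 x * (e \<bullet> Y n) - 1/2 * (U2 x * (e \<bullet> Y n)\<^sup>2)) / (norm (Y n))\<^sup>2 - 0) < r"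
    proof (cases "Y n = 0")
      case True
      then show ?thesis using r by simp
    next
      case False
      then have ny: "(norm (Y n))\<^sup>2 > 0" by simp
      have "h\<^sup>2 \<le> (norm (Y n) * norm e)\<^sup>2"
        using habs by (metis abs_ge_zero power2_abs power_mono)
      then have h2: "h\<^sup>2 \<le> (norm (Y n))\<^sup>2 * (norm e)\<^sup>2" by (simp add: power_mult_distrib)
      have "\<bar>(U2 t - U2 x) / 2 * h\<^sup>2\<bar> = \<bar>U2 t - U2 x\<bar> / 2 * h\<^sup>2" by (simp add: abs_mult)
      also have "\<dots> \<le> r' / 2 * ((norm (Y n))\<^sup>2 * (norm e)\<^sup>2)"
        using U2d h2 r' by (intro mult_mono divide_right_mono) auto
      also have "\<dots> < r * (norm (Y n))\<^sup>2"
      proof -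
        have pe: "(norm e)\<^sup>2 + 1 > 0" by (simp add: add_nonneg_pos)
        have "r * (norm e)\<^sup>2 < r * ((norm e)\<^sup>2 + 1)" using r by simp
        then have "r * (norm e)\<^sup>2 / ((norm e)\<^sup>2 + 1) < r" using pe by (simp add: divide_less_eq)
        then have "r' * (norm e)\<^sup>2 < r" unfolding r'_def by simp
        then have "r' / 2 * (norm e)\<^sup>2 < r" using r' r by simp
        then show ?thesis using ny by (simp add: field_simps)
      qed
      finally have "\<bar>(U2 t - U2 x) / 2 * h\<^sup>2\<bar> < r * (norm (Y n))\<^sup>2" .
      then show ?thesis unfolding num using ny by (simp add: field_simps abs_divide)
    qed
  qed
qed


lemma key_S:
  fixes s e :: "real^'n"
  assumes "\<forall>i. 0 \<le> s$i \<and> s$i < 1/(K * real CARD('n))" "K > 0" "x > 0" "\<forall>i. e$i \<ge> - K * x"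
  shows "(1 - K * (\<Sum>i\<in>UNIV. s$i)) * x \<le> x + s \<bullet> e" "0 < 1 - K * (\<Sum>i\<in>UNIV. s$i)"
    "1 - K * (\<Sum>i\<in>UNIV. s$i) \<le> 1"
proof -
  have "s \<bullet> e = (\<Sum>i\<in>UNIV. s$i * e$i)" by (simp add: inner_vec_def)
  also have "\<dots> \<ge> (\<Sum>i\<in>UNIV. s$i * (- K * x))"
    using assms(1,4) by (intro sum_mono mult_left_mono) auto
  finally have "s \<bullet> e \<ge> - K * x * (\<Sum>i\<in>UNIV. s$i)" by (simp add: sum_distrib_left mult_ac)
  then show "(1 - K * (\<Sum>i\<in>UNIV. s$i)) * x \<le> x + s \<bullet> e" by (simp add: algebra_simps)
  have "(\<Sum>i\<in>UNIV. s$i) < (\<Sum>i\<in>(UNIV::'n set). 1/(K * real CARD('n)))"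
    using assms(1) by (intro sum_strict_mono) auto
  also have "\<dots> = 1 / K" using assms(2) by simp
  finally have "K * (\<Sum>i\<in>UNIV. s$i) < 1" using assms(2) by (simp add: field_simps)
  then show "0 < 1 - K * (\<Sum>i\<in>UNIV. s$i)" by simp
  have "(\<Sum>i\<in>UNIV. s$i) \<ge> 0" using assms(1) by (intro sum_nonneg) auto
  then show "1 - K * (\<Sum>i\<in>UNIV. s$i) \<le> 1" using assms(2) by simp
qed

lemma sum_le_norm:
  fixes s :: "real^'n"
  shows "(\<Sum>i\<in>UNIV. s$i) \<le> real CARD('n) * norm s"
proof -
  have "(\<Sum>i\<in>UNIV. s$i) \<le> (\<Sum>i\<in>(UNIV::'n set). norm s)"
    by (intro sum_mono) (metis abs_ge_self component_le_norm_cart order_trans)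
  then show ?thesis by simp
qed


lemma abs_le_norm_helper: "\<bar>a\<bar> \<le> b \<Longrightarrow> norm (a::real) \<le> norm b"
  by auto

theorem lemma1:
  fixes M :: "'a measure" and U U1 U2 :: "real \<Rightarrow> real"
    and \<xi> :: "'a \<Rightarrow> real" and \<eta> :: "'a \<Rightarrow> real ^ 'n" and K :: real
  assumes "prob_space M"
    and "utility_A2 U U1 U2"
    and "\<xi> \<in> borel_measurable M" and "\<forall>\<omega>\<in>space M. \<xi> \<omega> > 0"
    and "integrable M (\<lambda>\<omega>. U (\<xi> \<omega>))"
    and "\<eta> \<in> borel_measurable M"
    and "K > 0"
    and "\<forall>\<omega>\<in>space M. \<forall>i. \<eta> \<omega> $ i \<ge> - K * \<xi> \<omega>"
    and "integrable M (\<lambda>\<omega>. - U2 (\<xi> \<omega>) * (norm (\<eta> \<omega>))\<^sup>2)"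
  defines "S \<equiv> {s :: real ^ 'n. \<forall>i. 0 \<le> s $ i \<and> s $ i < 1 / (K * real CARD('n))}"
    and "w \<equiv> (\<lambda>s. integral\<^sup>L M (\<lambda>\<omega>. U (\<xi> \<omega> + s \<bullet> \<eta> \<omega>)))"
  shows "(\<forall>s\<in>S. integrable M (\<lambda>\<omega>. U (\<xi> \<omega> + s \<bullet> \<eta> \<omega>))
                 \<and> integrable M (\<lambda>\<omega>. U1 (\<xi> \<omega>) * (\<eta> \<omega> \<bullet> s))
                 \<and> integrable M (\<lambda>\<omega>. U2 (\<xi> \<omega>) * (\<eta> \<omega> \<bullet> s)\<^sup>2))
                 \<and> ((\<lambda>s. w s - w 0
              - integral\<^sup>L M (\<lambda>\<omega>. U1 (\<xi> \<omega>) * (\<eta> \<omega> \<bullet> s))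
              - 1/2 * integral\<^sup>L M (\<lambda>\<omega>. U2 (\<xi> \<omega>) * (\<eta> \<omega> \<bullet> s)\<^sup>2))
           \<in> o[at 0 within S](\<lambda>s. (norm s)\<^sup>2))"
proof -
  interpret prob_space M by fact
  note util = assms(2)
  have xpos: "\<And>\<omega>. \<omega> \<in> space M \<Longrightarrow> \<xi> \<omega> > 0" using assms(4) by auto
  have etab: "\<And>\<omega> i. \<omega> \<in> space M \<Longrightarrow> \<eta> \<omega> $ i \<ge> - K * \<xi> \<omega>" using assms(8) by auto
  have mxi[measurable]: "\<xi> \<in> borel_measurable M" by fact
  have meta[measurable]: "\<eta> \<in> borel_measurable M" by fact
  obtain cU where cU: "cU > 0" "\<And>x. 0 < x \<Longrightarrow> x * U1 x \<le> cU * (\<bar>U x\<bar> + 1)"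
    using xU1_bound[OF util] by blast
  obtain cV where cV: "cV > 0" "\<And>x. x > 0 \<Longrightarrow> U1 x \<le> cV * x * (- U2 x)"
    using U1_by_U2[OF util] by blast
  have mU[measurable]: "(\<lambda>\<omega>. U (\<xi> \<omega>)) \<in> borel_measurable M"
    using meas_comp_pos[OF util_cont(1)[OF util] mxi] xpos by blast
  have mU1[measurable]: "(\<lambda>\<omega>. U1 (\<xi> \<omega>)) \<in> borel_measurable M"
    using meas_comp_pos[OF util_cont(2)[OF util] mxi] xpos by blast
  have mU2[measurable]: "(\<lambda>\<omega>. U2 (\<xi> \<omega>)) \<in> borel_measurable M"
    using meas_comp_pos[OF util_cont(3)[OF util] mxi] xpos by blast
  have key: "\<And>s \<omega>. s \<in> S \<Longrightarrow> \<omega> \<in> space M \<Longrightarrow>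
      (1 - K * (\<Sum>i\<in>UNIV. s$i)) * \<xi> \<omega> \<le> \<xi> \<omega> + s \<bullet> \<eta> \<omega> \<and> 0 < 1 - K * (\<Sum>i\<in>UNIV. s$i)
      \<and> 1 - K * (\<Sum>i\<in>UNIV. s$i) \<le> 1"
  proof -
    fix s \<omega> assume s: "s \<in> S" and \<omega>: "\<omega> \<in> space M"
    have s': "\<forall>i. 0 \<le> s$i \<and> s$i < 1/(K * real CARD('n))" using s unfolding S_def by blast
    show "?thesis s \<omega>"
      using key_S[OF s' assms(7) xpos[OF \<omega>]] etab[OF \<omega>] by blast
  qed
  have spos: "\<And>s \<omega>. s \<in> S \<Longrightarrow> \<omega> \<in> space M \<Longrightarrow> \<xi> \<omega> + s \<bullet> \<eta> \<omega> > 0"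
  proof -
    fix s \<omega> assume s: "s \<in> S" and \<omega>: "\<omega> \<in> space M"
    have "0 < (1 - K * (\<Sum>i\<in>UNIV. s$i)) * \<xi> \<omega>" using key[OF s \<omega>] xpos[OF \<omega>] by simp
    then show "\<xi> \<omega> + s \<bullet> \<eta> \<omega> > 0" using key[OF s \<omega>] by linarith
  qed
  have mUs[measurable]: "(\<lambda>\<omega>. U (\<xi> \<omega> + s \<bullet> \<eta> \<omega>)) \<in> borel_measurable M" if "s \<in> S" for s
  proof -
    have "\<forall>\<omega>\<in>space M. \<xi> \<omega> + s \<bullet> \<eta> \<omega> > 0" using spos[OF that] by blast
    moreover have m: "(\<lambda>\<omega>. \<xi> \<omega> + s \<bullet> \<eta> \<omega>) \<in> borel_measurable M" by measurable
    ultimately show ?thesis using meas_comp_pos[OF util_cont(1)[OF util] m] by blast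
  qed
  have I_U: "integrable M (\<lambda>\<omega>. U (\<xi> \<omega>))" by fact
  have I_V: "integrable M (\<lambda>\<omega>. - U2 (\<xi> \<omega>) * (norm (\<eta> \<omega>))\<^sup>2)" by fact
  have I_xU1: "integrable M (\<lambda>\<omega>. \<xi> \<omega> * U1 (\<xi> \<omega>))"
  proof (rule Bochner_Integration.integrable_bound[where f="\<lambda>\<omega>. cU * (\<bar>U (\<xi> \<omega>)\<bar> + 1)"])
    show "integrable M (\<lambda>\<omega>. cU * (\<bar>U (\<xi> \<omega>)\<bar> + 1))" using I_U by auto
    show "AE \<omega> in M. norm (\<xi> \<omega> * U1 (\<xi> \<omega>)) \<le> norm (cU * (\<bar>U (\<xi> \<omega>)\<bar> + 1))"
    proof (rule AE_I2)
      fix \<omega> assume \<omega>: "\<omega> \<in> space M"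
      have "0 \<le> \<xi> \<omega> * U1 (\<xi> \<omega>)" using xpos[OF \<omega>] util_sign[OF util xpos[OF \<omega>]] by simp
      then show "norm (\<xi> \<omega> * U1 (\<xi> \<omega>)) \<le> norm (cU * (\<bar>U (\<xi> \<omega>)\<bar> + 1))"
        using cU(2)[OF xpos[OF \<omega>]] cU(1) by simp
    qed
  qed measurable
  have I_U1eta: "integrable M (\<lambda>\<omega>. U1 (\<xi> \<omega>) * norm (\<eta> \<omega>))"
  proof (rule Bochner_Integration.integrable_bound[where f="\<lambda>\<omega>. \<xi> \<omega> * U1 (\<xi> \<omega>) + cV * (- U2 (\<xi> \<omega>) * (norm (\<eta> \<omega>))\<^sup>2)"])
    show "integrable M (\<lambda>\<omega>. \<xi> \<omega> * U1 (\<xi> \<omega>) + cV * (- U2 (\<xi> \<omega>) * (norm (\<eta> \<omega>))\<^sup>2))"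
      using I_xU1 I_V by auto
    show "AE \<omega> in M. norm (U1 (\<xi> \<omega>) * norm (\<eta> \<omega>)) \<le> norm (\<xi> \<omega> * U1 (\<xi> \<omega>) + cV * (- U2 (\<xi> \<omega>) * (norm (\<eta> \<omega>))\<^sup>2))"
    proof (rule AE_I2)
      fix \<omega> assume \<omega>: "\<omega> \<in> space M"
      define a where "a = \<xi> \<omega>"
      define b where "b = norm (\<eta> \<omega>)"
      define u where "u = U1 (\<xi> \<omega>)"
      define v where "v = - U2 (\<xi> \<omega>)"
      have a: "a > 0" unfolding a_def using xpos[OF \<omega>] .
      have b: "b \<ge> 0" unfolding b_def by simp
      have u: "u > 0" unfolding u_def using util_sign[OF util xpos[OF \<omega>]] by simp
      have v: "v > 0" unfolding v_def using util_sign[OF util xpos[OF \<omega>]] by simp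
      have uv: "u \<le> cV * a * v" unfolding u_def a_def v_def using cV(2)[OF xpos[OF \<omega>]] .
      have "a * b \<le> a\<^sup>2 + b\<^sup>2"
      proof -
        have "0 \<le> (a - b)\<^sup>2" by simp
        then have "2 * (a * b) \<le> a\<^sup>2 + b\<^sup>2" by (simp add: power2_diff)
        moreover have "a * b \<ge> 0" using a b by simp
        ultimately show ?thesis by linarith
      qed
      then have "b \<le> a + b\<^sup>2 / a" using a by (simp add: field_simps power2_eq_square)
      then have "u * b \<le> u * (a + b\<^sup>2 / a)" using u by (simp add: mult_left_mono)
      also have "\<dots> = a * u + (u / a) * b\<^sup>2" using a by (simp add: field_simps)
      also have "(u / a) \<le> cV * v" using uv a by (simp add: field_simps)
      then have "(u / a) * b\<^sup>2 \<le> cV * v * b\<^sup>2" by (rule mult_right_mono) simp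
      then have "a * u + (u / a) * b\<^sup>2 \<le> a * u + cV * v * b\<^sup>2" by (rule add_left_mono)
      finally have "u * b \<le> a * u + cV * (v * b\<^sup>2)" by (simp add: mult_ac)
      moreover have "0 \<le> u * b" using u b by simp
      ultimately show "norm (U1 (\<xi> \<omega>) * norm (\<eta> \<omega>)) \<le> norm (\<xi> \<omega> * U1 (\<xi> \<omega>) + cV * (- U2 (\<xi> \<omega>) * (norm (\<eta> \<omega>))\<^sup>2))"
        unfolding a_def b_def u_def v_def by simp
    qed
  qed measurable
  have bndL: "\<bar>U1 (\<xi> \<omega>) * (\<eta> \<omega> \<bullet> s)\<bar> \<le> norm s * (U1 (\<xi> \<omega>) * norm (\<eta> \<omega>))" if "\<omega> \<in> space M" for \<omega> s
  proof -
    have "\<bar>U1 (\<xi> \<omega>) * (\<eta> \<omega> \<bullet> s)\<bar> = U1 (\<xi> \<omega>) * \<bar>\<eta> \<omega> \<bullet> s\<bar>"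
      using util_sign[OF util xpos[OF that]] by (simp add: abs_mult)
    also have "\<dots> \<le> U1 (\<xi> \<omega>) * (norm (\<eta> \<omega>) * norm s)"
      using util_sign[OF util xpos[OF that]] by (intro mult_left_mono Cauchy_Schwarz_ineq2) auto
    finally show ?thesis by (simp add: mult_ac)
  qed
  have bndh2: "(\<eta> \<omega> \<bullet> s)\<^sup>2 \<le> (norm s)\<^sup>2 * (norm (\<eta> \<omega>))\<^sup>2" for \<omega> s
  proof -
    have "\<bar>\<eta> \<omega> \<bullet> s\<bar> \<le> norm (\<eta> \<omega>) * norm s" by (rule Cauchy_Schwarz_ineq2)
    then have "\<bar>\<eta> \<omega> \<bullet> s\<bar>\<^sup>2 \<le> (norm (\<eta> \<omega>) * norm s)\<^sup>2" by (intro power_mono) auto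
    then show ?thesis by (simp add: power_mult_distrib mult_ac)
  qed
  have bndQ: "\<bar>U2 (\<xi> \<omega>) * (\<eta> \<omega> \<bullet> s)\<^sup>2\<bar> \<le> (norm s)\<^sup>2 * (- U2 (\<xi> \<omega>) * (norm (\<eta> \<omega>))\<^sup>2)" if "\<omega> \<in> space M" for \<omega> s
  proof -
    have "\<bar>U2 (\<xi> \<omega>) * (\<eta> \<omega> \<bullet> s)\<^sup>2\<bar> = - U2 (\<xi> \<omega>) * (\<eta> \<omega> \<bullet> s)\<^sup>2"
      using util_sign[OF util xpos[OF that]] by (simp add: abs_mult)
    also have "\<dots> \<le> - U2 (\<xi> \<omega>) * ((norm s)\<^sup>2 * (norm (\<eta> \<omega>))\<^sup>2)"
      using util_sign[OF util xpos[OF that]] bndh2 by (intro mult_left_mono) auto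
    finally show ?thesis by (simp add: mult_ac)
  qed
  have I_L: "integrable M (\<lambda>\<omega>. U1 (\<xi> \<omega>) * (\<eta> \<omega> \<bullet> s))" for s
  proof (rule Bochner_Integration.integrable_bound[where f="\<lambda>\<omega>. norm s * (U1 (\<xi> \<omega>) * norm (\<eta> \<omega>))"])
    show "integrable M (\<lambda>\<omega>. norm s * (U1 (\<xi> \<omega>) * norm (\<eta> \<omega>)))" using I_U1eta by auto
    show "AE \<omega> in M. norm (U1 (\<xi> \<omega>) * (\<eta> \<omega> \<bullet> s)) \<le> norm (norm s * (U1 (\<xi> \<omega>) * norm (\<eta> \<omega>)))"
    proof (rule AE_I2)
      fix \<omega> assume \<omega>: "\<omega> \<in> space M"
      have "0 \<le> norm s * (U1 (\<xi> \<omega>) * norm (\<eta> \<omega>))"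
        using util_sign[OF util xpos[OF \<omega>]] by simp
      then show "norm (U1 (\<xi> \<omega>) * (\<eta> \<omega> \<bullet> s)) \<le> norm (norm s * (U1 (\<xi> \<omega>) * norm (\<eta> \<omega>)))"
        using bndL[OF \<omega>, of s] by (intro abs_le_norm_helper)
    qed
  qed measurable
  have I_Q: "integrable M (\<lambda>\<omega>. U2 (\<xi> \<omega>) * (\<eta> \<omega> \<bullet> s)\<^sup>2)" for s
  proof (rule Bochner_Integration.integrable_bound[where f="\<lambda>\<omega>. (norm s)\<^sup>2 * (- U2 (\<xi> \<omega>) * (norm (\<eta> \<omega>))\<^sup>2)"])
    show "integrable M (\<lambda>\<omega>. (norm s)\<^sup>2 * (- U2 (\<xi> \<omega>) * (norm (\<eta> \<omega>))\<^sup>2))" using I_V by auto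
    show "AE \<omega> in M. norm (U2 (\<xi> \<omega>) * (\<eta> \<omega> \<bullet> s)\<^sup>2) \<le> norm ((norm s)\<^sup>2 * (- U2 (\<xi> \<omega>) * (norm (\<eta> \<omega>))\<^sup>2))"
    proof (rule AE_I2)
      fix \<omega> assume \<omega>: "\<omega> \<in> space M"
      have "0 \<le> - U2 (\<xi> \<omega>) * (norm (\<eta> \<omega>))\<^sup>2"
        using util_sign[OF util xpos[OF \<omega>]] by (intro mult_nonneg_nonneg) simp_all
      then have "0 \<le> (norm s)\<^sup>2 * (- U2 (\<xi> \<omega>) * (norm (\<eta> \<omega>))\<^sup>2)"
        by (rule mult_nonneg_nonneg[OF zero_le_power2])
      then show "norm (U2 (\<xi> \<omega>) * (\<eta> \<omega> \<bullet> s)\<^sup>2) \<le> norm ((norm s)\<^sup>2 * (- U2 (\<xi> \<omega>) * (norm (\<eta> \<omega>))\<^sup>2))"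
        using bndQ[OF \<omega>, of s] by (intro abs_le_norm_helper)
    qed
  qed measurable
  have I_Us: "integrable M (\<lambda>\<omega>. U (\<xi> \<omega> + s \<bullet> \<eta> \<omega>))" if s: "s \<in> S" for s
  proof -
    define l where "l = 1 - K * (\<Sum>i\<in>UNIV. s$i)"
    have l: "0 < l" "l \<le> 1" unfolding l_def using key[OF s] assms(1) prob_space.not_empty
      by (metis ex_in_conv)+
    obtain C where C: "C > 0" "\<And>x z. 0 < x \<Longrightarrow> l * x \<le> z \<Longrightarrow> - U2 z \<le> C * (- U2 x)"
      using U2_bound[OF util l] by blast
    show ?thesis
    proof (rule Bochner_Integration.integrable_bound[where f="\<lambda>\<omega>. \<bar>U (\<xi> \<omega>)\<bar> + norm s * (U1 (\<xi> \<omega>) * norm (\<eta> \<omega>))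
        + C / 2 * ((norm s)\<^sup>2 * (- U2 (\<xi> \<omega>) * (norm (\<eta> \<omega>))\<^sup>2))"])
      show "integrable M (\<lambda>\<omega>. \<bar>U (\<xi> \<omega>)\<bar> + norm s * (U1 (\<xi> \<omega>) * norm (\<eta> \<omega>))
        + C / 2 * ((norm s)\<^sup>2 * (- U2 (\<xi> \<omega>) * (norm (\<eta> \<omega>))\<^sup>2)))"
        using I_U I_U1eta I_V by auto
      show "AE \<omega> in M. norm (U (\<xi> \<omega> + s \<bullet> \<eta> \<omega>)) \<le> norm (\<bar>U (\<xi> \<omega>)\<bar> + norm s * (U1 (\<xi> \<omega>) * norm (\<eta> \<omega>))
        + C / 2 * ((norm s)\<^sup>2 * (- U2 (\<xi> \<omega>) * (norm (\<eta> \<omega>))\<^sup>2)))"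
      proof (rule AE_I2)
        fix \<omega> assume \<omega>: "\<omega> \<in> space M"
        have x: "\<xi> \<omega> > 0" using xpos[OF \<omega>] .
        have lx: "l * \<xi> \<omega> \<le> \<xi> \<omega> + s \<bullet> \<eta> \<omega>" unfolding l_def using key[OF s \<omega>] by blast
        have b: "\<bar>U (\<xi> \<omega> + s \<bullet> \<eta> \<omega>)\<bar> \<le> \<bar>U (\<xi> \<omega>)\<bar> + \<bar>U1 (\<xi> \<omega>) * (s \<bullet> \<eta> \<omega>)\<bar> + C / 2 * (- U2 (\<xi> \<omega>)) * (s \<bullet> \<eta> \<omega>)\<^sup>2"
          using rem_bound(2)[OF util x spos[OF s \<omega>] lx l C(2)] by simp
        have "\<bar>U1 (\<xi> \<omega>) * (s \<bullet> \<eta> \<omega>)\<bar> \<le> norm s * (U1 (\<xi> \<omega>) * norm (\<eta> \<omega>))"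
          using bndL[OF \<omega>, of s] by (simp add: inner_commute)
        moreover have "C / 2 * (- U2 (\<xi> \<omega>)) * (s \<bullet> \<eta> \<omega>)\<^sup>2 \<le> C / 2 * ((norm s)\<^sup>2 * (- U2 (\<xi> \<omega>) * (norm (\<eta> \<omega>))\<^sup>2))"
        proof -
          have "C / 2 * (- U2 (\<xi> \<omega>)) * (s \<bullet> \<eta> \<omega>)\<^sup>2 \<le> C / 2 * (- U2 (\<xi> \<omega>)) * ((norm s)\<^sup>2 * (norm (\<eta> \<omega>))\<^sup>2)"
          proof (rule mult_left_mono)
            show "(s \<bullet> \<eta> \<omega>)\<^sup>2 \<le> (norm s)\<^sup>2 * (norm (\<eta> \<omega>))\<^sup>2" using bndh2[of \<omega> s] by (simp add: inner_commute)
            have "0 < C / 2 * (- U2 (\<xi> \<omega>))" using C(1) util_sign[OF util x] by (intro mult_pos_pos) simp_all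
            then show "0 \<le> C / 2 * (- U2 (\<xi> \<omega>))" by linarith
          qed
          then show ?thesis by (simp add: mult_ac)
        qed
        ultimately have "\<bar>U (\<xi> \<omega> + s \<bullet> \<eta> \<omega>)\<bar> \<le> \<bar>U (\<xi> \<omega>)\<bar> + norm s * (U1 (\<xi> \<omega>) * norm (\<eta> \<omega>))
          + C / 2 * ((norm s)\<^sup>2 * (- U2 (\<xi> \<omega>) * (norm (\<eta> \<omega>))\<^sup>2))" using b by linarith
        then show "norm (U (\<xi> \<omega> + s \<bullet> \<eta> \<omega>)) \<le> norm (\<bar>U (\<xi> \<omega>)\<bar> + norm s * (U1 (\<xi> \<omega>) * norm (\<eta> \<omega>))
          + C / 2 * ((norm s)\<^sup>2 * (- U2 (\<xi> \<omega>) * (norm (\<eta> \<omega>))\<^sup>2)))" by simp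
      qed
    qed (use mUs[OF s] in simp)
  qed
  show ?thesis
  proof
    show "\<forall>s\<in>S. integrable M (\<lambda>\<omega>. U (\<xi> \<omega> + s \<bullet> \<eta> \<omega>))
                 \<and> integrable M (\<lambda>\<omega>. U1 (\<xi> \<omega>) * (\<eta> \<omega> \<bullet> s))
                 \<and> integrable M (\<lambda>\<omega>. U2 (\<xi> \<omega>) * (\<eta> \<omega> \<bullet> s)\<^sup>2)"
      using I_Us I_L I_Q by blast
    show "(\<lambda>s. w s - w 0
              - integral\<^sup>L M (\<lambda>\<omega>. U1 (\<xi> \<omega>) * (\<eta> \<omega> \<bullet> s))
              - 1/2 * integral\<^sup>L M (\<lambda>\<omega>. U2 (\<xi> \<omega>) * (\<eta> \<omega> \<bullet> s)\<^sup>2))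
           \<in> o[at 0 within S](\<lambda>s. (norm s)\<^sup>2)" (is "?F \<in> _")
    proof -
      define R where "R = (\<lambda>s \<omega>. U (\<xi> \<omega> + s \<bullet> \<eta> \<omega>) - U (\<xi> \<omega>) - U1 (\<xi> \<omega>) * (\<eta> \<omega> \<bullet> s)
         - 1/2 * (U2 (\<xi> \<omega>) * (\<eta> \<omega> \<bullet> s)\<^sup>2))"
      have eqR: "?F s = integral\<^sup>L M (R s)" if s: "s \<in> S" for s
      proof -
        have "integral\<^sup>L M (R s) = integral\<^sup>L M (\<lambda>\<omega>. U (\<xi> \<omega> + s \<bullet> \<eta> \<omega>)) - integral\<^sup>L M (\<lambda>\<omega>. U (\<xi> \<omega>))
           - integral\<^sup>L M (\<lambda>\<omega>. U1 (\<xi> \<omega>) * (\<eta> \<omega> \<bullet> s)) - 1/2 * integral\<^sup>L M (\<lambda>\<omega>. U2 (\<xi> \<omega>) * (\<eta> \<omega> \<bullet> s)\<^sup>2)"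
        proof -
          have iA: "integrable M (\<lambda>\<omega>. U (\<xi> \<omega> + s \<bullet> \<eta> \<omega>))" using I_Us[OF s] .
          have iL: "integrable M (\<lambda>\<omega>. U1 (\<xi> \<omega>) * (\<eta> \<omega> \<bullet> s))" using I_L[of s] .
          have iQ: "integrable M (\<lambda>\<omega>. 1/2 * (U2 (\<xi> \<omega>) * (\<eta> \<omega> \<bullet> s)\<^sup>2))" using I_Q[of s] by simp
          have iAB: "integrable M (\<lambda>\<omega>. U (\<xi> \<omega> + s \<bullet> \<eta> \<omega>) - U (\<xi> \<omega>))"
            by (rule Bochner_Integration.integrable_diff[OF iA I_U])
          have iABL: "integrable M (\<lambda>\<omega>. U (\<xi> \<omega> + s \<bullet> \<eta> \<omega>) - U (\<xi> \<omega>) - U1 (\<xi> \<omega>) * (\<eta> \<omega> \<bullet> s))"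
            by (rule Bochner_Integration.integrable_diff[OF iAB iL])
          have "integral\<^sup>L M (R s) = integral\<^sup>L M (\<lambda>\<omega>. U (\<xi> \<omega> + s \<bullet> \<eta> \<omega>) - U (\<xi> \<omega>) - U1 (\<xi> \<omega>) * (\<eta> \<omega> \<bullet> s))
              - integral\<^sup>L M (\<lambda>\<omega>. 1/2 * (U2 (\<xi> \<omega>) * (\<eta> \<omega> \<bullet> s)\<^sup>2))"
            unfolding R_def by (rule Bochner_Integration.integral_diff[OF iABL iQ])
          also have "integral\<^sup>L M (\<lambda>\<omega>. U (\<xi> \<omega> + s \<bullet> \<eta> \<omega>) - U (\<xi> \<omega>) - U1 (\<xi> \<omega>) * (\<eta> \<omega> \<bullet> s))
              = integral\<^sup>L M (\<lambda>\<omega>. U (\<xi> \<omega> + s \<bullet> \<eta> \<omega>) - U (\<xi> \<omega>)) - integral\<^sup>L M (\<lambda>\<omega>. U1 (\<xi> \<omega>) * (\<eta> \<omega> \<bullet> s))"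
            by (rule Bochner_Integration.integral_diff[OF iAB iL])
          also have "integral\<^sup>L M (\<lambda>\<omega>. U (\<xi> \<omega> + s \<bullet> \<eta> \<omega>) - U (\<xi> \<omega>))
              = integral\<^sup>L M (\<lambda>\<omega>. U (\<xi> \<omega> + s \<bullet> \<eta> \<omega>)) - integral\<^sup>L M (\<lambda>\<omega>. U (\<xi> \<omega>))"
            by (rule Bochner_Integration.integral_diff[OF iA I_U])
          also have "integral\<^sup>L M (\<lambda>\<omega>. 1/2 * (U2 (\<xi> \<omega>) * (\<eta> \<omega> \<bullet> s)\<^sup>2))
              = 1/2 * integral\<^sup>L M (\<lambda>\<omega>. U2 (\<xi> \<omega>) * (\<eta> \<omega> \<bullet> s)\<^sup>2)"
            by (rule integral_mult_right_zero)
          finally show ?thesis .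
        qed
        then show ?thesis unfolding w_def by simp
      qed
      have mR: "R s \<in> borel_measurable M" if s: "s \<in> S" for s
        unfolding R_def using mUs[OF s] by measurable
      define d0 where "d0 = 1 / (2 * K * real CARD('n))"
      have d0: "d0 > 0" unfolding d0_def using assms(7) by simp
      obtain C where C: "C > 0" "\<And>x z. 0 < x \<Longrightarrow> 1/2 * x \<le> z \<Longrightarrow> - U2 z \<le> C * (- U2 x)"
        using U2_bound[OF util, of "1/2"] by auto
      have domR: "\<bar>R s \<omega>\<bar> \<le> (C + 1) / 2 * (- U2 (\<xi> \<omega>) * (norm (\<eta> \<omega>))\<^sup>2) * (norm s)\<^sup>2"
        if s: "s \<in> S" "norm s < d0" and \<omega>: "\<omega> \<in> space M" for s \<omega>
      proof -
        have x: "\<xi> \<omega> > 0" using xpos[OF \<omega>] .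
        have "(\<Sum>i\<in>UNIV. s$i) \<le> real CARD('n) * norm s" by (rule sum_le_norm)
        also have "\<dots> < real CARD('n) * d0" using s(2) by simp
        also have "\<dots> = 1 / (2 * K)" unfolding d0_def by simp
        finally have "K * (\<Sum>i\<in>UNIV. s$i) < 1/2" using assms(7) by (simp add: field_simps)
        then have "1/2 * \<xi> \<omega> \<le> (1 - K * (\<Sum>i\<in>UNIV. s$i)) * \<xi> \<omega>" using x
          by (intro mult_right_mono) auto
        then have lx: "1/2 * \<xi> \<omega> \<le> \<xi> \<omega> + s \<bullet> \<eta> \<omega>" using key[OF s(1) \<omega>] by linarith
        have "\<bar>R s \<omega>\<bar> \<le> (C + 1) / 2 * (- U2 (\<xi> \<omega>)) * (s \<bullet> \<eta> \<omega>)\<^sup>2"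
          using rem_bound(1)[OF util x spos[OF s(1) \<omega>] lx _ _ C(2)] unfolding R_def
          by (simp add: inner_commute)
        also have "\<dots> \<le> (C + 1) / 2 * (- U2 (\<xi> \<omega>)) * ((norm s)\<^sup>2 * (norm (\<eta> \<omega>))\<^sup>2)"
        proof (rule mult_left_mono)
          show "(s \<bullet> \<eta> \<omega>)\<^sup>2 \<le> (norm s)\<^sup>2 * (norm (\<eta> \<omega>))\<^sup>2" using bndh2[of \<omega> s] by (simp add: inner_commute)
          have "0 < (C + 1) / 2 * (- U2 (\<xi> \<omega>))" using C(1) util_sign[OF util x] by (intro mult_pos_pos) simp_all
          then show "0 \<le> (C + 1) / 2 * (- U2 (\<xi> \<omega>))" by linarith
        qed
        finally show ?thesis by (simp add: mult_ac)
      qed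
      have lim: "((\<lambda>s. integral\<^sup>L M (R s) / (norm s)\<^sup>2) \<longlongrightarrow> 0) (at 0 within S)"
      proof (rule Lim_within_LIMSEQ, intro allI impI, elim conjE)
        fix X :: "nat \<Rightarrow> real^'n"
        assume X: "\<forall>n. X n \<noteq> 0 \<and> X n \<in> S" "X \<longlonglongrightarrow> 0"
        obtain N where N: "\<forall>n\<ge>N. norm (X n - 0) < d0" using LIMSEQ_D[OF X(2) d0] by blast
        define Y where "Y = (\<lambda>m. X (m + N))"
        have Y1: "Y m \<noteq> 0" "Y m \<in> S" "norm (Y m) < d0" for m
        proof -
          have "X (m + N) \<noteq> 0 \<and> X (m + N) \<in> S" using X(1) by blast
          moreover have "norm (X (m + N) - 0) < d0" using N le_add2 by blast
          ultimately show "Y m \<noteq> 0" "Y m \<in> S" "norm (Y m) < d0" unfolding Y_def by simp_all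
        qed
        have Y2: "Y \<longlonglongrightarrow> 0" unfolding Y_def using LIMSEQ_ignore_initial_segment[OF X(2)] .
        have "(\<lambda>m. integral\<^sup>L M (\<lambda>\<omega>. R (Y m) \<omega> / (norm (Y m))\<^sup>2)) \<longlonglongrightarrow> integral\<^sup>L M (\<lambda>\<omega>. 0::real)"
        proof (rule integral_dominated_convergence[where w="\<lambda>\<omega>. (C + 1) / 2 * (- U2 (\<xi> \<omega>) * (norm (\<eta> \<omega>))\<^sup>2)"])
          show "(\<lambda>\<omega>. 0::real) \<in> borel_measurable M" by simp
          show "(\<lambda>\<omega>. R (Y m) \<omega> / (norm (Y m))\<^sup>2) \<in> borel_measurable M" for m
            using mR[OF Y1(2)] by measurable
          show "integrable M (\<lambda>\<omega>. (C + 1) / 2 * (- U2 (\<xi> \<omega>) * (norm (\<eta> \<omega>))\<^sup>2))"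
            using I_V by auto
          show "AE \<omega> in M. (\<lambda>m. R (Y m) \<omega> / (norm (Y m))\<^sup>2) \<longlonglongrightarrow> 0"
          proof (rule AE_I2)
            fix \<omega> assume \<omega>: "\<omega> \<in> space M"
            show "(\<lambda>m. R (Y m) \<omega> / (norm (Y m))\<^sup>2) \<longlonglongrightarrow> 0"
              using rem_pointwise[OF util xpos[OF \<omega>] Y2, of "\<eta> \<omega>"] spos[OF Y1(2) \<omega>]
              unfolding R_def by (simp add: inner_commute)
          qed
          show "AE \<omega> in M. norm (R (Y m) \<omega> / (norm (Y m))\<^sup>2) \<le> (C + 1) / 2 * (- U2 (\<xi> \<omega>) * (norm (\<eta> \<omega>))\<^sup>2)" for m
          proof (rule AE_I2)
            fix \<omega> assume \<omega>: "\<omega> \<in> space M"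
            have ny: "(norm (Y m))\<^sup>2 > 0" using Y1(1) by simp
            have "\<bar>R (Y m) \<omega>\<bar> \<le> (C + 1) / 2 * (- U2 (\<xi> \<omega>) * (norm (\<eta> \<omega>))\<^sup>2) * (norm (Y m))\<^sup>2"
              using domR[OF Y1(2) Y1(3) \<omega>] .
            then show "norm (R (Y m) \<omega> / (norm (Y m))\<^sup>2) \<le> (C + 1) / 2 * (- U2 (\<xi> \<omega>) * (norm (\<eta> \<omega>))\<^sup>2)"
              using ny by (simp add: abs_divide divide_le_eq)
          qed
        qed
        then have "(\<lambda>m. integral\<^sup>L M (R (Y m)) / (norm (Y m))\<^sup>2) \<longlonglongrightarrow> 0"
          by (simp only: integral_divide_zero Bochner_Integration.integral_zero)
        then have "(\<lambda>m. integral\<^sup>L M (R (X (m + N))) / (norm (X (m + N)))\<^sup>2) \<longlonglongrightarrow> 0"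
          unfolding Y_def .
        then show "(\<lambda>n. integral\<^sup>L M (R (X n)) / (norm (X n))\<^sup>2) \<longlonglongrightarrow> 0"
          by (rule LIMSEQ_offset[where f="\<lambda>n. integral\<^sup>L M (R (X n)) / (norm (X n))\<^sup>2" and k=N])
      qed
      have ev: "eventually (\<lambda>s. s \<in> S \<and> s \<noteq> 0) (at 0 within S)"
        by (simp add: eventually_at_filter)
      have "eventually (\<lambda>s. integral\<^sup>L M (R s) / (norm s)\<^sup>2 = ?F s / (norm s)\<^sup>2) (at 0 within S)"
        using ev
      proof eventually_elim
        case (elim s)
        then have e: "?F s = integral\<^sup>L M (R s)" using eqR by blast
        show ?case by (simp only: e)
      qed
      then have "((\<lambda>s. ?F s / (norm s)\<^sup>2) \<longlongrightarrow> 0) (at 0 within S)"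
        using lim by (rule tendsto_cong[THEN iffD1])
      moreover have "eventually (\<lambda>s. (norm s)\<^sup>2 \<noteq> 0) (at 0 within S)"
        using ev by eventually_elim simp
      ultimately show ?thesis by (rule smalloI_tendsto)
    qed
  qed
qed

end
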